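(* Let $G$ be a graph and $l \ge \gamma(G)$ an integer, and let $A$ and $B$ be dominating sets of $G$ with $|A| = |B| = l$. If there is a path in $D_{l+1}(G)$ joining $A$ and $B$, then there exists a walk between $A$ and $B$ in $D_{l+1}(G)$ all of whose vertices are dominating sets of cardinality $l$ or $l+1$.
   Context: All graphs are finite and simple. A set $S \subseteq V(G)$ is a dominating set of $G$ if every vertex of $V(G)\setminus S$ is adjacent to a vertex of $S$. $\gamma(G)$ is the minimum cardinality of a dominating set of $G$. For an integer $k \ge \gamma(G)$, the $k$-dominating graph $D_k(G)$ is the graph whose vertices are the dominating sets of $G$ of cardinality at most $k$, with two such sets $A,B$ adjacent if and only if their symmetric difference $(A\setminus B)\cup(B\setminus A)$ consists of exactly one vertex of $G$. *)

theory Defs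
  imports Main
begin

definition simple_graph :: "'a set \<Rightarrow> ('a \<Rightarrow> 'a \<Rightarrow> bool) \<Rightarrow> bool" where
  "simple_graph V E \<longleftrightarrow> finite V \<and> (\<forall>u v. E u v \<longrightarrow> u \<in> V \<and> v \<in> V)
     \<and> (\<forall>u v. E u v \<longrightarrow> E v u) \<and> (\<forall>v. \<not> E v v)"

definition dominating_set :: "'a set \<Rightarrow> ('a \<Rightarrow> 'a \<Rightarrow> bool) \<Rightarrow> 'a set \<Rightarrow> bool" where
  "dominating_set V E S \<longleftrightarrow> S \<subseteq> V \<and> (\<forall>v \<in> V - S. \<exists>s \<in> S. E v s)"

definition domination_number :: "'a set \<Rightarrow> ('a \<Rightarrow> 'a \<Rightarrow> bool) \<Rightarrow> nat" where
  "domination_number V E = (LEAST n. \<exists>S. dominating_set V E S \<and> card S = n)"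

definition Dk_vertices :: "'a set \<Rightarrow> ('a \<Rightarrow> 'a \<Rightarrow> bool) \<Rightarrow> nat \<Rightarrow> 'a set set" where
  "Dk_vertices V E k = {S. dominating_set V E S \<and> card S \<le> k}"

definition Dk_adj :: "'a set \<Rightarrow> ('a \<Rightarrow> 'a \<Rightarrow> bool) \<Rightarrow> nat \<Rightarrow> 'a set \<Rightarrow> 'a set \<Rightarrow> bool" where
  "Dk_adj V E k A B \<longleftrightarrow> A \<in> Dk_vertices V E k \<and> B \<in> Dk_vertices V E k
     \<and> (\<exists>x. (A - B) \<union> (B - A) = {x})"

definition Dk_walk :: "'a set \<Rightarrow> ('a \<Rightarrow> 'a \<Rightarrow> bool) \<Rightarrow> nat \<Rightarrow> 'a set list \<Rightarrow> 'a set \<Rightarrow> 'a set \<Rightarrow> bool" where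
  "Dk_walk V E k W A B \<longleftrightarrow> W \<noteq> [] \<and> hd W = A \<and> last W = B
     \<and> set W \<subseteq> Dk_vertices V E k
     \<and> (\<forall>i. Suc i < length W \<longrightarrow> Dk_adj V E k (W ! i) (W ! Suc i))"

definition Dk_path :: "'a set \<Rightarrow> ('a \<Rightarrow> 'a \<Rightarrow> bool) \<Rightarrow> nat \<Rightarrow> 'a set list \<Rightarrow> 'a set \<Rightarrow> 'a set \<Rightarrow> bool" where
  "Dk_path V E k W A B \<longleftrightarrow> Dk_walk V E k W A B \<and> distinct W"

end

theory Submission
  imports Defs
begin

lemma walk_snoc:
  assumes "Dk_walk V E k W A T" "Dk_adj V E k T T'"
  shows "Dk_walk V E k (W@[T']) A T'"
proof -
  have W: "W \<noteq> []" "hd W = A" "last W = T" "set W \<subseteq> Dk_vertices V E k"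
    "\<forall>i. Suc i < length W \<longrightarrow> Dk_adj V E k (W ! i) (W ! Suc i)"
    using assms(1) unfolding Dk_walk_def by auto
  have T': "T' \<in> Dk_vertices V E k" using assms(2) unfolding Dk_adj_def by auto
  have "\<forall>i. Suc i < length (W@[T']) \<longrightarrow> Dk_adj V E k ((W@[T']) ! i) ((W@[T']) ! Suc i)"
  proof (intro allI impI)
    fix i assume i: "Suc i < length (W@[T'])"
    show "Dk_adj V E k ((W@[T']) ! i) ((W@[T']) ! Suc i)"
    proof (cases "Suc i < length W")
      case True then show ?thesis using W(5) by (simp add: nth_append)
    next
      case False
      then have "i = length W - 1" "Suc i = length W" using i by auto
      moreover have "W ! (length W - 1) = T" using W(1,3) by (simp add: last_conv_nth)
      ultimately show ?thesis using assms(2) by (simp add: nth_append)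
    qed
  qed
  then show ?thesis using W T' unfolding Dk_walk_def by auto
qed

lemma dom_super:
  assumes "dominating_set V E S" "S \<subseteq> T" "T \<subseteq> V"
  shows "dominating_set V E T"
  using assms unfolding dominating_set_def by blast

lemma adj_ins:
  assumes "dominating_set V E X" "dominating_set V E (insert x X)" "x \<notin> X"
    "card X \<le> k" "card (insert x X) \<le> k"
  shows "Dk_adj V E k X (insert x X)" "Dk_adj V E k (insert x X) X"
proof -
  have "(X - insert x X) \<union> (insert x X - X) = {x}" "(insert x X - X) \<union> (X - insert x X) = {x}"
    using assms(3) by auto
  then show "Dk_adj V E k X (insert x X)" "Dk_adj V E k (insert x X) X"
    using assms unfolding Dk_adj_def Dk_vertices_def by auto
qed

definition good where
  "good V E l W A T \<longleftrightarrow> Dk_walk V E (l + 1) W A T \<and> (\<forall>S \<in> set W. card S = l \<or> card S = l + 1)"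

lemma good_last:
  assumes "good V E l W A T"
  shows "T \<in> set W" "dominating_set V E T" "card T = l \<or> card T = l + 1"
proof -
  have "W \<noteq> []" "last W = T" using assms unfolding good_def Dk_walk_def by auto
  then show "T \<in> set W" by auto
  then show "dominating_set V E T" "card T = l \<or> card T = l + 1"
    using assms unfolding good_def Dk_walk_def Dk_vertices_def by auto
qed

lemma good_snoc:
  assumes "good V E l W A T" "Dk_adj V E (l+1) T T'" "card T' = l \<or> card T' = l + 1"
  shows "good V E l (W@[T']) A T'"
  using assms walk_snoc unfolding good_def by fastforce

theorem lemma10:
  fixes V :: "'a set" and E :: "'a \<Rightarrow> 'a \<Rightarrow> bool" and l :: nat and A B :: "'a set"
  assumes "simple_graph V E"
    and "l \<ge> domination_number V E"
    and "dominating_set V E A" and "dominating_set V E B"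
    and "card A = l" and "card B = l"
    and "\<exists>P. Dk_path V E (l + 1) P A B"
  shows "\<exists>W. Dk_walk V E (l + 1) W A B \<and> (\<forall>S \<in> set W. card S = l \<or> card S = l + 1)"
proof -
  have finV: "finite V" using assms(1) unfolding simple_graph_def by auto
  have domV: "\<And>S. dominating_set V E S \<Longrightarrow> S \<subseteq> V" unfolding dominating_set_def by auto
  have finS: "\<And>S. dominating_set V E S \<Longrightarrow> finite S" using domV finV finite_subset by blast
  obtain P where P: "Dk_walk V E (l + 1) P A B" using assms(7) unfolding Dk_path_def by auto
  have P1: "P \<noteq> []" "hd P = A" "last P = B" "set P \<subseteq> Dk_vertices V E (l+1)"
    "\<forall>i. Suc i < length P \<longrightarrow> Dk_adj V E (l+1) (P ! i) (P ! Suc i)"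
    using P unfolding Dk_walk_def by auto
  have main: "\<exists>W T. good V E l W A T \<and> P ! i \<subseteq> T" if "i < length P" for i
    using that
  proof (induction i)
    case 0
    have "A \<in> Dk_vertices V E (l+1)" using assms(3,5) unfolding Dk_vertices_def by auto
    then have "good V E l [A] A A" using assms(5) unfolding good_def Dk_walk_def by auto
    moreover have "P ! 0 = A" using P1(1,2) by (simp add: hd_conv_nth)
    ultimately show ?case by auto
  next
    case (Suc i)
    then obtain W T where WT: "good V E l W A T" "P ! i \<subseteq> T" by auto
    define S where "S = P ! i"
    define S' where "S' = P ! Suc i"
    have adj: "Dk_adj V E (l+1) S S'" using P1(5) Suc.prems S_def S'_def by auto
    then obtain x where x: "(S - S') \<union> (S' - S) = {x}" unfolding Dk_adj_def by auto
    have dS: "dominating_set V E S" "card S \<le> l+1" and dS': "dominating_set V E S'" "card S' \<le> l+1"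
      using adj unfolding Dk_adj_def Dk_vertices_def by auto
    have TT: "dominating_set V E T" "card T = l \<or> card T = l + 1" using good_last[OF WT(1)] by auto
    have finT: "finite T" using finS TT(1) by auto
    have TV: "T \<subseteq> V" using domV TT(1) by auto
    show ?case
    proof (cases "x \<in> S")
      case True
      then have "S' \<subseteq> S" using x by blast
      then show ?thesis using WT S_def S'_def by blast
    next
      case False
      then have xS: "x \<notin> S" by simp
      have x1: "S - S' \<subseteq> {x}" "S' - S \<subseteq> {x}" "x \<in> (S - S') \<union> (S' - S)"
        using x by (simp_all only: Un_subset_iff[symmetric]) auto
      have "x \<in> S' - S" using x1(3) xS by simp
      moreover have "S - S' = {}" using x1(1) xS by auto
      moreover note x1(2)
      ultimately have S'eq: "S' = insert x S" by blast
      have xV: "x \<in> V" using domV dS'(1) S'eq by auto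
      show ?thesis
      proof (cases "x \<in> T")
        case True
        then have "S' \<subseteq> T" using WT(2) S_def S'eq by simp
        then show ?thesis using WT(1) S'_def by blast
      next
        case xT: False
        show ?thesis
        proof (cases "card T = l")
          case True
          have d2: "dominating_set V E (insert x T)" using dom_super TT(1) TV xV by blast
          have c2: "card (insert x T) = l + 1" using True finT xT by simp
          have "Dk_adj V E (l+1) T (insert x T)" using adj_ins(1)[OF TT(1) d2 xT] True c2 by simp
          then have "good V E l (W@[insert x T]) A (insert x T)" using good_snoc WT(1) c2 by blast
          moreover have "S' \<subseteq> insert x T" using S'eq WT(2) S_def by auto
          ultimately show ?thesis using S'_def by blast
        next
          case False
          then have cT: "card T = l + 1" using TT(2) by auto
          have finSS: "finite S" using finS dS(1) by auto
          have "card S' = card S + 1" using S'eq xS finSS by simp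
          then have "card S < card T" using dS'(2) cT by simp
          then have "S \<noteq> T" by auto
          then obtain y where y: "y \<in> T" "y \<notin> S" using WT(2) S_def by blast
          define U where "U = T - {y}"
          have TU: "T = insert y U" "y \<notin> U" using y U_def by auto
          have SU: "S \<subseteq> U" using WT(2) S_def y U_def by auto
          have UV: "U \<subseteq> V" using TV U_def by auto
          have dU: "dominating_set V E U" using dom_super dS(1) SU UV by blast
          have finU: "finite U" using finT U_def by auto
          have cU: "card U = l" using cT TU finU by simp
          have a1: "Dk_adj V E (l+1) T U" using adj_ins(2)[OF dU _ TU(2)] TU TT(1) cU cT by simp
          have g1: "good V E l (W@[U]) A U" using good_snoc[OF WT(1) a1] cU by simp
          have xU: "x \<notin> U" using xT U_def by auto
          have d2: "dominating_set V E (insert x U)" using dom_super dU UV xV by blast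
          have c2: "card (insert x U) = l + 1" using cU finU xU by simp
          have a2: "Dk_adj V E (l+1) U (insert x U)" using adj_ins(1)[OF dU d2 xU] cU c2 by simp
          have "good V E l ((W@[U])@[insert x U]) A (insert x U)" using good_snoc[OF g1 a2] c2 by simp
          moreover have "S' \<subseteq> insert x U" using S'eq SU by auto
          ultimately show ?thesis using S'_def by blast
        qed
      qed
    qed
  qed
  have "length P - 1 < length P" using P1(1) by simp
  then obtain W T where WT: "good V E l W A T" "P ! (length P - 1) \<subseteq> T" using main by blast
  have BT: "B \<subseteq> T" using WT(2) P1(1,3) by (simp add: last_conv_nth)
  have TT: "dominating_set V E T" "card T = l \<or> card T = l + 1" using good_last[OF WT(1)] by auto
  have finT: "finite T" using finS TT(1) by auto
  show ?thesis
  proof (cases "T = B")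
    case True then show ?thesis using WT(1) unfolding good_def by blast
  next
    case False
    then have cT: "card T = l + 1" proof -
      have "card T \<noteq> l" using card_subset_eq[OF finT BT] False assms(6) by auto
      then show ?thesis using TT(2) by auto
    qed
    obtain y where y: "y \<in> T" "y \<notin> B" using False BT by blast
    have "card (T - {y}) = l" using cT y finT by simp
    moreover have "B \<subseteq> T - {y}" using BT y by auto
    ultimately have "T - {y} = B" using assms(6) card_subset_eq[of "T - {y}" B] finT by auto
    then have TB: "T = insert y B" using y by auto
    have "Dk_adj V E (l+1) (insert y B) B" using adj_ins(2)[OF assms(4) _ y(2)] TB TT(1) cT assms(6) by simp
    then have "good V E l (W@[B]) A B" using good_snoc WT(1) TB assms(6) by blast
    then show ?thesis unfolding good_def by blast
  qed
qed

end
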